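(* Let $n\ge1$, $i\ge1$ be integers and let $A$, $B$, $C$ be the functions on $D^*$ described in the context, with $\|A\|_D,\|B\|_D,\|C\|_D$ finite. For $(x,y)\in D^*$ let $\widehat{DT}(x,y)=\begin{pmatrix}A(x,y)&B(x,y)\\ C(x,y)&1\end{pmatrix}$, an $(n+1)\times(n+1)$ matrix, and let $M^i:L^i(\mathbb{R}^{n+1},\mathbb{R}^n)\to L^i(\mathbb{R}^{n+1},\mathbb{R}^n)$ be given by $M^i(b)(x_1,\dots,x_i)=b(\widehat{DT}(x,y)x_1,\dots,\widehat{DT}(x,y)x_i)$. Then the space $L^i(\mathbb{R}^{n+1},\mathbb{R}^n)$ can be endowed with a norm $|\cdot|_i$ equivalent to the operator norm $\|\cdot\|$ such that for every nonzero $b$, $$\frac{|M^i(b)|_i}{|b|_i}\le\max_{\substack{m,n'\in\mathbb{N}\\ m+n'=i}}\big\{(\|A\|_D+\|B\|_D)^m(\|C\|_D+1)^{n'}\big\}.$$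
   Context: $\|\cdot\|$ is a norm on $\mathbb{R}^n$, with induced operator norms; $L^i(\mathbb{R}^{n+1},\mathbb{R}^n)$ denotes continuous $i$-linear maps from $(\mathbb{R}^{n+1})^i$ to $\mathbb{R}^n$. $D=\{(x,y)\in\mathbb{R}^n\times\mathbb{R}:\|x\|\le1,|y|\le1\}$, $D_0=\{(x,0)\in D\}$, $D^*=D\setminus D_0$. $T=(F,G):D^*\to D$ with $F,G$ differentiable on $D^*$ and $\partial_yG$ nonvanishing on $D^*$; $A=\partial_xF(\partial_yG)^{-1}$ (an $n\times n$ matrix), $B=\partial_yF(\partial_yG)^{-1}$ (an $n$-column), $C=\partial_xG(\partial_yG)^{-1}$ (an $n$-row), and $\|M\|_D=\sup_{(x,y)\in D^*}\|M(x,y)\|$. *)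

theory Defs
  imports "HOL-Analysis.Analysis"
begin

definition is_norm :: "('a::real_vector \<Rightarrow> real) \<Rightarrow> bool" where
  "is_norm N \<longleftrightarrow> (\<forall>x. N x = 0 \<longleftrightarrow> x = 0) \<and> (\<forall>c x. N (c *\<^sub>R x) = \<bar>c\<bar> * N x)
     \<and> (\<forall>x y. N (x + y) \<le> N x + N y)"

text \<open>The induced norm on R^(n+1) = R^n x R, whose closed unit ball is D.\<close>
definition Nplus :: "(real^'n \<Rightarrow> real) \<Rightarrow> (real^'n) \<times> real \<Rightarrow> real" where
  "Nplus N v = max (N (fst v)) \<bar>snd v\<bar>"

definition Dset :: "(real^'n \<Rightarrow> real) \<Rightarrow> ((real^'n) \<times> real) set" where
  "Dset N = {(x, y). N x \<le> 1 \<and> \<bar>y\<bar> \<le> 1}"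

definition D0set :: "(real^'n \<Rightarrow> real) \<Rightarrow> ((real^'n) \<times> real) set" where
  "D0set N = {(x, y). (x, y) \<in> Dset N \<and> y = 0}"

definition Dstar :: "(real^'n \<Rightarrow> real) \<Rightarrow> ((real^'n) \<times> real) set" where
  "Dstar N = Dset N - D0set N"

text \<open>Continuous i-linear maps (R^(n+1))^i \<rightarrow> R^n, with arguments given as a
  sequence xs of which only the entries with index < i matter.
  (Continuity is automatic in finite dimension.)\<close>
definition multilin :: "nat \<Rightarrow> ((nat \<Rightarrow> (real^'n) \<times> real) \<Rightarrow> real^'n) \<Rightarrow> bool" where
  "multilin i b \<longleftrightarrow>
     (\<forall>xs ys. (\<forall>k<i. xs k = ys k) \<longrightarrow> b xs = b ys) \<and>
     (\<forall>k<i. \<forall>xs u v. b (xs(k := u + v)) = b (xs(k := u)) + b (xs(k := v))) \<and>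
     (\<forall>k<i. \<forall>xs c u. b (xs(k := c *\<^sub>R u)) = c *\<^sub>R b (xs(k := u)))"

definition Lmulti :: "nat \<Rightarrow> ((nat \<Rightarrow> (real^'n) \<times> real) \<Rightarrow> real^'n) set" where
  "Lmulti i = {b. multilin i b}"

definition opnormL :: "(real^'n \<Rightarrow> real) \<Rightarrow> nat \<Rightarrow> ((nat \<Rightarrow> (real^'n) \<times> real) \<Rightarrow> real^'n) \<Rightarrow> real" where
  "opnormL N i b = Sup {N (b xs) | xs. \<forall>k<i. Nplus N (xs k) \<le> 1}"

definition is_norm_on_L :: "nat \<Rightarrow> (((nat \<Rightarrow> (real^'n) \<times> real) \<Rightarrow> real^'n) \<Rightarrow> real) \<Rightarrow> bool" where
  "is_norm_on_L i nrm \<longleftrightarrow>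
     (\<forall>b\<in>Lmulti i. nrm b = 0 \<longleftrightarrow> b = (\<lambda>_. 0)) \<and>
     (\<forall>b\<in>Lmulti i. \<forall>c. nrm (\<lambda>xs. c *\<^sub>R b xs) = \<bar>c\<bar> * nrm b) \<and>
     (\<forall>b\<in>Lmulti i. \<forall>b'\<in>Lmulti i. nrm (\<lambda>xs. b xs + b' xs) \<le> nrm b + nrm b')"

definition opnorm_nn :: "(real^'n \<Rightarrow> real) \<Rightarrow> (real^'n \<Rightarrow> real^'n) \<Rightarrow> real" where
  "opnorm_nn N L = Sup {N (L h) | h. N h \<le> 1}"

definition opnorm_n1 :: "(real^'n \<Rightarrow> real) \<Rightarrow> (real^'n \<Rightarrow> real) \<Rightarrow> real" where
  "opnorm_n1 N L = Sup {\<bar>L h\<bar> | h. N h \<le> 1}"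

text \<open>A = d_xF (d_yG)^-1, B = d_yF (d_yG)^-1, C = d_xG (d_yG)^-1, from the derivatives F', G'.\<close>
definition Amap :: "((real^'n) \<times> real \<Rightarrow> (real^'n) \<times> real \<Rightarrow> real^'n) \<Rightarrow> ((real^'n) \<times> real \<Rightarrow> (real^'n) \<times> real \<Rightarrow> real)
     \<Rightarrow> (real^'n) \<times> real \<Rightarrow> real^'n \<Rightarrow> real^'n" where
  "Amap F' G' p h = inverse (G' p (0, 1)) *\<^sub>R F' p (h, 0)"

definition Bvec :: "((real^'n) \<times> real \<Rightarrow> (real^'n) \<times> real \<Rightarrow> real^'n) \<Rightarrow> ((real^'n) \<times> real \<Rightarrow> (real^'n) \<times> real \<Rightarrow> real)
     \<Rightarrow> (real^'n) \<times> real \<Rightarrow> real^'n" where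
  "Bvec F' G' p = inverse (G' p (0, 1)) *\<^sub>R F' p (0, 1)"

definition Cmap :: "((real^'n) \<times> real \<Rightarrow> (real^'n) \<times> real \<Rightarrow> real)
     \<Rightarrow> (real^'n) \<times> real \<Rightarrow> real^'n \<Rightarrow> real" where
  "Cmap G' p h = inverse (G' p (0, 1)) * G' p (h, 0)"

definition DThat :: "((real^'n) \<times> real \<Rightarrow> (real^'n) \<times> real \<Rightarrow> real^'n) \<Rightarrow> ((real^'n) \<times> real \<Rightarrow> (real^'n) \<times> real \<Rightarrow> real)
     \<Rightarrow> (real^'n) \<times> real \<Rightarrow> (real^'n) \<times> real \<Rightarrow> (real^'n) \<times> real" where
  "DThat F' G' p v = (Amap F' G' p (fst v) + snd v *\<^sub>R Bvec F' G' p,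
                      Cmap G' p (fst v) + snd v)"

definition Mop :: "((real^'n) \<times> real \<Rightarrow> (real^'n) \<times> real \<Rightarrow> real^'n) \<Rightarrow> ((real^'n) \<times> real \<Rightarrow> (real^'n) \<times> real \<Rightarrow> real)
     \<Rightarrow> (real^'n) \<times> real \<Rightarrow> ((nat \<Rightarrow> (real^'n) \<times> real) \<Rightarrow> real^'n) \<Rightarrow> (nat \<Rightarrow> (real^'n) \<times> real) \<Rightarrow> real^'n" where
  "Mop F' G' p b xs = b (\<lambda>k. DThat F' G' p (xs k))"

definition supD :: "(real^'n \<Rightarrow> real) \<Rightarrow> ((real^'n) \<times> real \<Rightarrow> real) \<Rightarrow> real" where
  "supD N f = (SUP p\<in>Dstar N. f p)"

end

theory Submission imports Defs "HOL-Analysis.Analysis" begin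

lemma N0: "is_norm N \<Longrightarrow> N 0 = 0" unfolding is_norm_def by blast
lemma Nneg: "is_norm N \<Longrightarrow> N (-x) = N x"
  unfolding is_norm_def by (metis abs_neg_one mult_1 scaleR_minus1_left)
lemma Nge0: "is_norm N \<Longrightarrow> N x \<ge> 0"
proof -
  assume n: "is_norm N"
  have "N (x + -x) \<le> N x + N (-x)" using n unfolding is_norm_def by blast
  thus ?thesis using N0[OF n] Nneg[OF n] by simp
qed
lemma Nscale: "is_norm N \<Longrightarrow> N (c *\<^sub>R x) = \<bar>c\<bar> * N x" unfolding is_norm_def by blast
lemma Ntri: "is_norm N \<Longrightarrow> N (x + y) \<le> N x + N y" unfolding is_norm_def by blast
lemma Nzero: "is_norm N \<Longrightarrow> N x = 0 \<longleftrightarrow> x = 0" unfolding is_norm_def by blast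

lemma Nsum: assumes n: "is_norm N" shows "finite S \<Longrightarrow> N (sum f S) \<le> (\<Sum>x\<in>S. N (f x))"
proof (induction S rule: finite_induct)
  case empty thus ?case by (simp add: N0[OF n])
next
  case (insert x F)
  then show ?case using Ntri[OF n, of "f x" "sum f F"] by simp
qed

lemma Nupper:
  fixes N :: "'a::euclidean_space \<Rightarrow> real"
  assumes n: "is_norm N"
  shows "\<exists>K\<ge>0. \<forall>x. N x \<le> K * norm x"
proof -
  define K where "K = (\<Sum>e\<in>Basis. N e)"
  have "K \<ge> 0" unfolding K_def by (simp add: Nge0[OF n] sum_nonneg)
  moreover have "N x \<le> K * norm x" for x
  proof -
    have "N x = N (\<Sum>e\<in>Basis. (x \<bullet> e) *\<^sub>R e)" by (simp add: euclidean_representation)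
    also have "\<dots> \<le> (\<Sum>e\<in>Basis. N ((x \<bullet> e) *\<^sub>R e))" by (rule Nsum[OF n]) simp
    also have "\<dots> = (\<Sum>e\<in>Basis. \<bar>x \<bullet> e\<bar> * N e)" by (simp add: Nscale[OF n])
    also have "\<dots> \<le> (\<Sum>e\<in>Basis. norm x * N e)"
      by (intro sum_mono mult_right_mono) (auto simp: Basis_le_norm Nge0[OF n])
    also have "\<dots> = K * norm x" by (simp add: K_def sum_distrib_left mult.commute)
    finally show ?thesis .
  qed
  ultimately show ?thesis by blast
qed

lemma Nlower:
  fixes N :: "'a::euclidean_space \<Rightarrow> real"
  assumes n: "is_norm N"
  shows "\<exists>m>0. \<forall>x. m * norm x \<le> N x"
proof -
  obtain K where K: "K \<ge> 0" "\<And>x. N x \<le> K * norm x" using Nupper[OF n] by blast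
  have lip: "\<bar>N x - N y\<bar> \<le> K * norm (x - y)" for x y
  proof -
    have "N x \<le> N y + N (x - y)" using Ntri[OF n, of y "x - y"] by simp
    moreover have "N y \<le> N x + N (y - x)" using Ntri[OF n, of x "y - x"] by simp
    moreover have "N (y - x) = N (x - y)" using Nneg[OF n, of "x - y"] by simp
    ultimately show ?thesis using K(2)[of "x - y"] by auto
  qed
  have cont: "continuous_on (sphere 0 1) N"
  proof (rule continuous_on_subset[of UNIV])
    show "continuous_on UNIV N"
      unfolding continuous_on_iff
    proof (intro ballI allI impI)
      fix x :: 'a and e :: real assume e: "e > 0"
      show "\<exists>d>0. \<forall>y\<in>UNIV. dist y x < d \<longrightarrow> dist (N y) (N x) < e"
      proof (intro exI[of _ "e / (K + 1)"] conjI ballI impI)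
        show "e / (K + 1) > 0" using e K by simp
        fix y assume "dist y x < e / (K + 1)"
        hence "norm (y - x) * (K + 1) < e" using K by (simp add: dist_norm field_simps)
        moreover have "dist (N y) (N x) \<le> K * norm (y - x)" using lip[of y x] by (simp add: dist_real_def)
        moreover have "K * norm (y - x) \<le> norm (y - x) * (K + 1)" by (simp add: algebra_simps)
        ultimately show "dist (N y) (N x) < e" by linarith
      qed
    qed
  qed simp
  obtain e :: 'a where e: "e \<in> Basis" using nonempty_Basis by blast
  have ne: "sphere (0::'a) 1 \<noteq> {}" using e by (auto simp: sphere_def intro!: exI[of _ e])
  obtain x0 where x0: "x0 \<in> sphere 0 1" "\<And>y. y \<in> sphere 0 1 \<Longrightarrow> N x0 \<le> N y"
    using continuous_attains_inf[OF compact_sphere ne cont] by blast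
  have "x0 \<noteq> 0" using x0(1) by auto
  hence m: "N x0 > 0" using Nge0[OF n, of x0] Nzero[OF n, of x0] by linarith
  have "N x0 * norm x \<le> N x" for x
  proof (cases "x = 0")
    case True thus ?thesis by (simp add: N0[OF n])
  next
    case False
    have "N x0 \<le> N (inverse (norm x) *\<^sub>R x)" using x0(2) False by simp
    also have "\<dots> = N x / norm x" using Nscale[OF n] by (simp add: divide_inverse mult.commute)
    finally show ?thesis using False by (simp add: field_simps)
  qed
  thus ?thesis using m by blast
qed


lemma ml_loc: "multilin i b \<Longrightarrow> (\<And>k. k < i \<Longrightarrow> xs k = ys k) \<Longrightarrow> b xs = b ys"
  unfolding multilin_def by blast
lemma ml_add: "multilin i b \<Longrightarrow> k < i \<Longrightarrow> b (xs(k := u + v)) = b (xs(k := u)) + b (xs(k := v))"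
  unfolding multilin_def by blast
lemma ml_scale: "multilin i b \<Longrightarrow> k < i \<Longrightarrow> b (xs(k := c *\<^sub>R u)) = c *\<^sub>R b (xs(k := u))"
  unfolding multilin_def by blast

lemma ml_scale_all_aux:
  assumes ml: "multilin i b"
  shows "j \<le> i \<Longrightarrow> b (\<lambda>k. if k < j then c k *\<^sub>R xs k else xs k) = (\<Prod>k<j. c k) *\<^sub>R b xs"
proof (induction j)
  case 0 thus ?case by simp
next
  case (Suc j)
  define ys where "ys = (\<lambda>k. if k < j then c k *\<^sub>R xs k else xs k)"
  have e: "(\<lambda>k. if k < Suc j then c k *\<^sub>R xs k else xs k) = ys(j := c j *\<^sub>R xs j)"
    by (auto simp: ys_def)
  have e2: "ys(j := xs j) = ys" by (auto simp: ys_def)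
  have "b (ys(j := c j *\<^sub>R xs j)) = c j *\<^sub>R b (ys(j := xs j))"
    using ml_scale[OF ml, of j] Suc(2) by simp
  also have "\<dots> = c j *\<^sub>R ((\<Prod>k<j. c k) *\<^sub>R b xs)" using e2 Suc by (simp add: ys_def)
  finally show ?case using e by (simp add: mult.commute)
qed

lemma ml_scale_all:
  assumes ml: "multilin i b"
  shows "b (\<lambda>k. c k *\<^sub>R xs k) = (\<Prod>k<i. c k) *\<^sub>R b xs"
proof -
  have "b (\<lambda>k. c k *\<^sub>R xs k) = b (\<lambda>k. if k < i then c k *\<^sub>R xs k else xs k)"
    by (rule ml_loc[OF ml]) simp
  thus ?thesis using ml_scale_all_aux[OF ml, of i] by simp
qed

lemma ml_zero:
  assumes ml: "multilin i b" and k: "k < i" and z: "xs k = 0"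
  shows "b xs = 0"
proof -
  have "b (xs(k := 0 *\<^sub>R 0)) = 0 *\<^sub>R b (xs(k := 0))" by (rule ml_scale[OF ml k])
  moreover have "xs(k := 0 *\<^sub>R 0) = xs" using z by auto
  ultimately show ?thesis by simp
qed

lemma ml_linear:
  assumes ml: "multilin i b" and k: "k < i"
  shows "linear (\<lambda>u. b (xs(k := u)))"
  by (rule linearI) (use ml_add[OF ml k] ml_scale[OF ml k] in auto)

lemma ml_bounded:
  fixes b :: "(nat \<Rightarrow> (real^'n) \<times> real) \<Rightarrow> real^'n"
  assumes ml: "multilin i b" and R: "R \<ge> 0"
  shows "\<exists>C. \<forall>xs. (\<forall>k<i. norm (xs k) \<le> R) \<longrightarrow> norm (b xs) \<le> C"
proof -
  define P where "P = PiE {..<i} (\<lambda>_. (Basis :: ((real^'n) \<times> real) set))"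
  have fP: "finite P" unfolding P_def by (simp add: finite_PiE)
  define C0 where "C0 = (\<Sum>f\<in>P. norm (b f))"
  define B where "B = real (card (Basis :: ((real^'n) \<times> real) set))"
  have "j \<le> i \<Longrightarrow> \<forall>xs. (\<forall>k<j. norm (xs k) \<le> R) \<longrightarrow> (\<forall>k. j \<le> k \<and> k < i \<longrightarrow> xs k \<in> Basis)
          \<longrightarrow> norm (b xs) \<le> (B * R) ^ j * C0" for j
  proof (induction j)
    case 0
    show ?case
    proof (intro allI impI)
      fix xs :: "nat \<Rightarrow> (real^'n) \<times> real"
      assume h: "\<forall>k. 0 \<le> k \<and> k < i \<longrightarrow> xs k \<in> Basis"
      have "b xs = b (restrict xs {..<i})" by (rule ml_loc[OF ml]) simp
      moreover have "restrict xs {..<i} \<in> P" using h by (auto simp: P_def)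
      ultimately have "norm (b xs) \<le> C0" unfolding C0_def
        using member_le_sum[OF _ _ fP, of "restrict xs {..<i}" "\<lambda>f. norm (b f)"] by simp
      thus "norm (b xs) \<le> (B * R) ^ 0 * C0" by simp
    qed
  next
    case (Suc j)
    hence ji: "j < i" by simp
    show ?case
    proof (intro allI impI)
      fix xs :: "nat \<Rightarrow> (real^'n) \<times> real"
      assume h1: "\<forall>k<Suc j. norm (xs k) \<le> R" and h2: "\<forall>k. Suc j \<le> k \<and> k < i \<longrightarrow> xs k \<in> Basis"
      define g where "g = (\<lambda>u. b (xs(j := u)))"
      have lg: "linear g" unfolding g_def by (rule ml_linear[OF ml ji])
      have "b xs = g (xs j)" by (simp add: g_def)
      also have "\<dots> = g (\<Sum>e\<in>Basis. (xs j \<bullet> e) *\<^sub>R e)" by (simp add: euclidean_representation)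
      also have "\<dots> = (\<Sum>e\<in>Basis. (xs j \<bullet> e) *\<^sub>R g e)"
        by (simp add: linear_sum[OF lg] linear_scale[OF lg] o_def)
      finally have "norm (b xs) \<le> (\<Sum>e\<in>Basis. norm ((xs j \<bullet> e) *\<^sub>R g e))"
        by (metis norm_sum)
      also have "\<dots> \<le> (\<Sum>e\<in>(Basis::((real^'n) \<times> real) set). R * ((B * R) ^ j * C0))"
      proof (rule sum_mono)
        fix e :: "(real^'n) \<times> real" assume e: "e \<in> Basis"
        have "norm (g e) \<le> (B * R) ^ j * C0"
          unfolding g_def using Suc.IH[of] ji h1 h2 e
          by (auto dest!: spec[of _ "xs(j := e)"])
        moreover have "\<bar>xs j \<bullet> e\<bar> \<le> R" using Basis_le_norm[OF e, of "xs j"] h1 by force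
        ultimately show "norm ((xs j \<bullet> e) *\<^sub>R g e) \<le> R * ((B * R) ^ j * C0)"
          by (simp add: mult_mono')
      qed
      also have "\<dots> = (B * R) ^ Suc j * C0" by (simp add: B_def)
      finally show "norm (b xs) \<le> (B * R) ^ Suc j * C0" .
    qed
  qed
  from this[of i] show ?thesis by (intro exI[of _ "(B * R) ^ i * C0"]) auto
qed


lemma Nplus0: "is_norm N \<Longrightarrow> Nplus N 0 = 0" by (simp add: Nplus_def N0)
lemma Nplus_zero: "is_norm N \<Longrightarrow> Nplus N v = 0 \<longleftrightarrow> v = 0"
proof (cases v)
  case (Pair a y)
  assume n: "is_norm N"
  have "max (N a) \<bar>y\<bar> = 0 \<longleftrightarrow> N a = 0 \<and> y = 0" using Nge0[OF n, of a]
    by (auto simp: max_def)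
  thus ?thesis using Pair Nzero[OF n] by (simp add: Nplus_def zero_prod_def)
qed
lemma Nplus_scale: "is_norm N \<Longrightarrow> Nplus N (c *\<^sub>R v) = \<bar>c\<bar> * Nplus N v"
  by (simp add: Nplus_def Nscale max_mult_distrib_left abs_mult)
lemma Nplus_ge0: "is_norm N \<Longrightarrow> Nplus N v \<ge> 0" by (simp add: Nplus_def Nge0 le_max_iff_disj)

abbreviation "SL N i b \<equiv> {N (b xs) | xs. \<forall>k<i. Nplus N (xs k) \<le> 1}"

lemma SL_ne: "is_norm N \<Longrightarrow> SL N i b \<noteq> {}"
  using Nplus0[of N] by (auto intro!: exI[of _ "\<lambda>_. 0"])

lemma opL_bdd:
  fixes N :: "real^'n \<Rightarrow> real"
  assumes n: "is_norm N" and ml: "multilin i b"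
  shows "bdd_above (SL N i b)"
proof -
  obtain m where m: "m > 0" "\<And>x. m * norm x \<le> N x" using Nlower[OF n] by blast
  obtain K where K: "K \<ge> 0" "\<And>x. N x \<le> K * norm x" using Nupper[OF n] by blast
  define R where "R = 1 / m + 1"
  have R: "R \<ge> 0" using m by (simp add: R_def)
  obtain C where C: "\<And>xs. (\<forall>k<i. norm (xs k) \<le> R) \<Longrightarrow> norm (b xs) \<le> C"
    using ml_bounded[OF ml R] by blast
  have "N (b xs) \<le> K * C" if h: "\<forall>k<i. Nplus N (xs k) \<le> 1" for xs
  proof -
    have "norm (xs k) \<le> R" if k: "k < i" for k
    proof -
      obtain x y where xy: "xs k = (x, y)" by fastforce
      have "N x \<le> 1" "\<bar>y\<bar> \<le> 1" using h k xy by (auto simp: Nplus_def)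
      hence "norm x \<le> 1 / m" using m(2)[of x] m(1) by (simp add: field_simps)
      thus ?thesis using xy norm_Pair_le[of x y] \<open>\<bar>y\<bar> \<le> 1\<close> by (simp add: R_def)
    qed
    hence "norm (b xs) \<le> C" using C by blast
    thus ?thesis using K by (meson mult_left_mono order_trans)
  qed
  thus ?thesis by (auto simp: bdd_above_def)
qed

lemma opL_upper:
  assumes n: "is_norm N" and ml: "multilin i b" and h: "\<forall>k<i. Nplus N (xs k) \<le> 1"
  shows "N (b xs) \<le> opnormL N i b"
  unfolding opnormL_def by (rule cSup_upper[OF _ opL_bdd[OF n ml]]) (use h in blast)

lemma opL_least:
  assumes n: "is_norm N" and h: "\<And>xs. \<forall>k<i. Nplus N (xs k) \<le> 1 \<Longrightarrow> N (f xs) \<le> M"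
  shows "opnormL N i f \<le> M"
  unfolding opnormL_def by (rule cSup_least[OF SL_ne[OF n]]) (use h in blast)

lemma opL_ge0:
  assumes n: "is_norm N" and ml: "multilin i b"
  shows "opnormL N i b \<ge> 0"
  using opL_upper[OF n ml, of "\<lambda>_. 0"] Nge0[OF n] Nplus0[OF n] by (metis order_trans zero_less_one less_imp_le)

lemma opL_pos:
  assumes n: "is_norm N" and ml: "multilin i b" and bx: "b xs \<noteq> 0"
  shows "opnormL N i b > 0"
proof -
  have nz: "xs k \<noteq> 0" if "k < i" for k using ml_zero[OF ml that] bx by blast
  define c where "c = (\<lambda>k. inverse (Nplus N (xs k)))"
  have "b (\<lambda>k. c k *\<^sub>R xs k) = (\<Prod>k<i. c k) *\<^sub>R b xs" by (rule ml_scale_all[OF ml])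
  moreover have "(\<Prod>k<i. c k) \<noteq> 0" using nz Nplus_zero[OF n] by (simp add: c_def)
  ultimately have ne: "b (\<lambda>k. c k *\<^sub>R xs k) \<noteq> 0" using bx by simp
  have "\<forall>k<i. Nplus N (c k *\<^sub>R xs k) \<le> 1"
    using nz Nplus_zero[OF n] Nplus_ge0[OF n] by (auto simp: c_def Nplus_scale[OF n])
  hence "N (b (\<lambda>k. c k *\<^sub>R xs k)) \<le> opnormL N i b" by (rule opL_upper[OF n ml])
  moreover have "N (b (\<lambda>k. c k *\<^sub>R xs k)) > 0" using ne Nzero[OF n] Nge0[OF n]
    by (metis less_eq_real_def)
  ultimately show ?thesis by linarith
qed

lemma opL_norm:
  fixes N :: "real^'n \<Rightarrow> real"
  assumes n: "is_norm N"
  shows "is_norm_on_L i (opnormL N i)"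
  unfolding is_norm_on_L_def
proof (intro conjI ballI allI)
  fix b :: "(nat \<Rightarrow> (real^'n) \<times> real) \<Rightarrow> real^'n" assume b: "b \<in> Lmulti i"
  hence ml: "multilin i b" by (simp add: Lmulti_def)
  show "opnormL N i b = 0 \<longleftrightarrow> b = (\<lambda>_. 0)"
  proof
    assume "opnormL N i b = 0"
    thus "b = (\<lambda>_. 0)" using opL_pos[OF n ml] by fastforce
  next
    assume "b = (\<lambda>_. 0)"
    thus "opnormL N i b = 0" using opL_ge0[OF n ml] opL_least[OF n, of i b 0] N0[OF n] by force
  qed
  fix c :: real
  have mlc: "multilin i (\<lambda>xs. c *\<^sub>R b xs)" using ml unfolding multilin_def
    by (simp add: scaleR_add_right)
  show "opnormL N i (\<lambda>xs. c *\<^sub>R b xs) = \<bar>c\<bar> * opnormL N i b"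
  proof (rule antisym)
    show "opnormL N i (\<lambda>xs. c *\<^sub>R b xs) \<le> \<bar>c\<bar> * opnormL N i b"
      by (rule opL_least[OF n]) (simp add: Nscale[OF n] mult_left_mono opL_upper[OF n ml])
    show "\<bar>c\<bar> * opnormL N i b \<le> opnormL N i (\<lambda>xs. c *\<^sub>R b xs)"
    proof (cases "c = 0")
      case True thus ?thesis using opL_ge0[OF n mlc] by simp
    next
      case False
      have "opnormL N i b \<le> opnormL N i (\<lambda>xs. c *\<^sub>R b xs) / \<bar>c\<bar>"
      proof (rule opL_least[OF n])
        fix xs assume "\<forall>k<i. Nplus N (xs k) \<le> 1"
        hence "N (c *\<^sub>R b xs) \<le> opnormL N i (\<lambda>xs. c *\<^sub>R b xs)"
          using opL_upper[OF n mlc] by blast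
        thus "N (b xs) \<le> opnormL N i (\<lambda>xs. c *\<^sub>R b xs) / \<bar>c\<bar>"
          using False by (simp add: Nscale[OF n] field_simps)
      qed
      thus ?thesis using False by (simp add: field_simps)
    qed
  qed
next
  fix b b' :: "(nat \<Rightarrow> (real^'n) \<times> real) \<Rightarrow> real^'n" assume b: "b \<in> Lmulti i" and b': "b' \<in> Lmulti i"
  hence ml: "multilin i b" "multilin i b'" by (auto simp: Lmulti_def)
  show "opnormL N i (\<lambda>xs. b xs + b' xs) \<le> opnormL N i b + opnormL N i b'"
  proof (rule opL_least[OF n])
    fix xs assume h: "\<forall>k<i. Nplus N (xs k) \<le> 1"
    show "N (b xs + b' xs) \<le> opnormL N i b + opnormL N i b'"
      using Ntri[OF n, of "b xs" "b' xs"] opL_upper[OF n ml(1) h] opL_upper[OF n ml(2) h] by linarith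
  qed
qed


lemma opnn_bound:
  fixes N :: "real^'n \<Rightarrow> real" and L :: "real^'n \<Rightarrow> real^'n"
  assumes n: "is_norm N" and lin: "linear L"
  shows "N (L h) \<le> opnorm_nn N L * N h" and "opnorm_nn N L \<ge> 0"
proof -
  obtain m where m: "m > 0" "\<And>x. m * norm x \<le> N x" using Nlower[OF n] by blast
  obtain K where K: "K \<ge> 0" "\<And>x. N x \<le> K * norm x" using Nupper[OF n] by blast
  have bl: "bounded_linear L" using lin by (simp add: linear_conv_bounded_linear)
  obtain KL where KL: "KL > 0" "\<And>x. norm (L x) \<le> norm x * KL"
    using bounded_linear.pos_bounded[OF bl] by blast
  have bdd: "bdd_above {N (L h) | h. N h \<le> 1}"
  proof -
    have "N (L h) \<le> K * KL / m" if "N h \<le> 1" for h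
    proof -
      have "norm h \<le> 1 / m" using m(2)[of h] m(1) that by (simp add: field_simps)
      have "N (L h) \<le> K * (norm h * KL)" using K(2)[of "L h"] KL(2)[of h] K(1)
        by (meson mult_left_mono order_trans)
      also have "\<dots> \<le> K * (1 / m * KL)" using \<open>norm h \<le> 1 / m\<close> K(1) KL(1)
        by (intro mult_left_mono mult_right_mono) auto
      finally show ?thesis by simp
    qed
    thus ?thesis by (auto simp: bdd_above_def)
  qed
  have up: "N (L h) \<le> opnorm_nn N L" if "N h \<le> 1" for h
    unfolding opnorm_nn_def by (rule cSup_upper[OF _ bdd]) (use that in blast)
  show "opnorm_nn N L \<ge> 0" using up[of 0] N0[OF n] linear_0[OF lin] by simp
  show "N (L h) \<le> opnorm_nn N L * N h"
  proof (cases "h = 0")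
    case True thus ?thesis using N0[OF n] linear_0[OF lin] by simp
  next
    case False
    hence hp: "N h > 0" using Nzero[OF n] Nge0[OF n] by (metis less_eq_real_def)
    have "N (L (inverse (N h) *\<^sub>R h)) \<le> opnorm_nn N L"
      using hp by (intro up) (simp add: Nscale[OF n])
    thus ?thesis using hp by (simp add: linear_scale[OF lin] Nscale[OF n] field_simps)
  qed
qed

lemma opn1_bound:
  fixes N :: "real^'n \<Rightarrow> real" and L :: "real^'n \<Rightarrow> real"
  assumes n: "is_norm N" and lin: "linear L"
  shows "\<bar>L h\<bar> \<le> opnorm_n1 N L * N h" and "opnorm_n1 N L \<ge> 0"
proof -
  obtain m where m: "m > 0" "\<And>x. m * norm x \<le> N x" using Nlower[OF n] by blast
  have bl: "bounded_linear L" using lin by (simp add: linear_conv_bounded_linear)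
  obtain KL where KL: "KL > 0" "\<And>x. norm (L x) \<le> norm x * KL"
    using bounded_linear.pos_bounded[OF bl] by blast
  have bdd: "bdd_above {\<bar>L h\<bar> | h. N h \<le> 1}"
  proof -
    have "\<bar>L h\<bar> \<le> 1 / m * KL" if "N h \<le> 1" for h
    proof -
      have "norm h \<le> 1 / m" using m(2)[of h] m(1) that by (simp add: field_simps)
      have "\<bar>L h\<bar> \<le> norm h * KL" using KL(2)[of h] by simp
      also have "\<dots> \<le> 1 / m * KL" using \<open>norm h \<le> 1 / m\<close> KL(1)
        by (intro mult_right_mono) auto
      finally show ?thesis .
    qed
    thus ?thesis by (auto simp: bdd_above_def)
  qed
  have up: "\<bar>L h\<bar> \<le> opnorm_n1 N L" if "N h \<le> 1" for h
    unfolding opnorm_n1_def by (rule cSup_upper[OF _ bdd]) (use that in blast)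
  show "opnorm_n1 N L \<ge> 0" using up[of 0] N0[OF n] linear_0[OF lin] by simp
  show "\<bar>L h\<bar> \<le> opnorm_n1 N L * N h"
  proof (cases "h = 0")
    case True thus ?thesis using N0[OF n] linear_0[OF lin] by simp
  next
    case False
    hence hp: "N h > 0" using Nzero[OF n] Nge0[OF n] by (metis less_eq_real_def)
    have "\<bar>L (inverse (N h) *\<^sub>R h)\<bar> \<le> opnorm_n1 N L"
      using hp by (intro up) (simp add: Nscale[OF n])
    thus ?thesis using hp by (simp add: linear_scale[OF lin] abs_mult field_simps)
  qed
qed

lemma lin_A:
  assumes "bounded_linear (F' p)"
  shows "linear (Amap F' G' p)"
proof -
  have "bounded_linear (\<lambda>h. inverse (G' p (0, 1)) *\<^sub>R F' p (h, 0))"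
    by (intro bounded_linear_compose[OF bounded_linear_scaleR_right]
        bounded_linear_compose[OF assms] bounded_linear_Pair bounded_linear_ident bounded_linear_zero)
  thus ?thesis unfolding Amap_def[abs_def] by (simp add: bounded_linear.linear)
qed

lemma lin_C:
  assumes "bounded_linear (G' p)"
  shows "linear (Cmap G' p)"
proof -
  have "bounded_linear (\<lambda>h. inverse (G' p (0, 1)) * G' p (h, 0))"
    by (intro bounded_linear_compose[OF bounded_linear_mult_right]
        bounded_linear_compose[OF assms] bounded_linear_Pair bounded_linear_ident bounded_linear_zero)
  thus ?thesis unfolding Cmap_def[abs_def] by (simp add: bounded_linear.linear)
qed

theorem mainTheorem6:
  fixes N :: "real^'n \<Rightarrow> real"
    and F :: "(real^'n) \<times> real \<Rightarrow> real^'n" and G :: "(real^'n) \<times> real \<Rightarrow> real"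
    and F' :: "(real^'n) \<times> real \<Rightarrow> (real^'n) \<times> real \<Rightarrow> real^'n"
    and G' :: "(real^'n) \<times> real \<Rightarrow> (real^'n) \<times> real \<Rightarrow> real"
    and i :: nat
  assumes normN: "is_norm N"
    and i1: "i \<ge> 1"
    and maps: "\<And>p. p \<in> Dstar N \<Longrightarrow> (F p, G p) \<in> Dset N"
    and dF: "\<And>p. p \<in> Dstar N \<Longrightarrow> (F has_derivative F' p) (at p within Dstar N)"
    and dG: "\<And>p. p \<in> Dstar N \<Longrightarrow> (G has_derivative G' p) (at p within Dstar N)"
    and dyG: "\<And>p. p \<in> Dstar N \<Longrightarrow> G' p (0, 1) \<noteq> 0"
    and bA: "bdd_above ((\<lambda>p. opnorm_nn N (Amap F' G' p)) ` Dstar N)"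
    and bB: "bdd_above ((\<lambda>p. N (Bvec F' G' p)) ` Dstar N)"
    and bC: "bdd_above ((\<lambda>p. opnorm_n1 N (Cmap G' p)) ` Dstar N)"
  shows "\<exists>nrm. is_norm_on_L i nrm
     \<and> (\<exists>c1 c2. c1 > 0 \<and> c2 > 0 \<and>
          (\<forall>b\<in>Lmulti i. c1 * opnormL N i b \<le> nrm b \<and> nrm b \<le> c2 * opnormL N i b))
     \<and> (\<forall>p\<in>Dstar N. \<forall>b\<in>Lmulti i. b \<noteq> (\<lambda>_. 0) \<longrightarrow>
          nrm (Mop F' G' p b) / nrm b
            \<le> Max {(supD N (\<lambda>p. opnorm_nn N (Amap F' G' p)) + supD N (\<lambda>p. N (Bvec F' G' p))) ^ m
                    * (supD N (\<lambda>p. opnorm_n1 N (Cmap G' p)) + 1) ^ m'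
                   | m m'. m + m' = i})"
proof -
  let ?a = "supD N (\<lambda>p. opnorm_nn N (Amap F' G' p))"
  let ?bb = "supD N (\<lambda>p. N (Bvec F' G' p))"
  let ?c = "supD N (\<lambda>p. opnorm_n1 N (Cmap G' p))"
  define K where "K = max (?a + ?bb) (?c + 1)"
  have ratio: "opnormL N i (Mop F' G' p b) / opnormL N i b \<le>
      Max {(?a + ?bb) ^ m * (?c + 1) ^ m' | m m'. m + m' = i}"
    if p: "p \<in> Dstar N" and b: "b \<in> Lmulti i" and bnz: "b \<noteq> (\<lambda>_. 0)" for p b
  proof -
    have ml: "multilin i b" using b by (simp add: Lmulti_def)
    have blF: "bounded_linear (F' p)" using dF[OF p] by (rule has_derivative_bounded_linear)
    have blG: "bounded_linear (G' p)" using dG[OF p] by (rule has_derivative_bounded_linear)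
    have lA: "linear (Amap F' G' p)" using lin_A[of F' p G'] blF by blast
    have lC: "linear (Cmap G' p)" using lin_C[of G' p] blG by blast
    have Aa: "opnorm_nn N (Amap F' G' p) \<le> ?a" unfolding supD_def by (rule cSUP_upper[OF p bA])
    have Bb: "N (Bvec F' G' p) \<le> ?bb" unfolding supD_def by (rule cSUP_upper[OF p bB])
    have Cc: "opnorm_n1 N (Cmap G' p) \<le> ?c" unfolding supD_def by (rule cSUP_upper[OF p bC])
    have a0: "?a \<ge> 0" using Aa opnn_bound(2)[OF normN lA] by linarith
    have b0: "?bb \<ge> 0" using Bb Nge0[OF normN, of "Bvec F' G' p"] by linarith
    have c0: "?c \<ge> 0" using Cc opn1_bound(2)[OF normN lC] by linarith
    have Kp: "K > 0" "K \<ge> 1" using c0 by (auto simp: K_def)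
    have DT: "Nplus N (DThat F' G' p v) \<le> K * Nplus N v" for v
    proof -
      obtain x y where v: "v = (x, y)" by fastforce
      have nx: "N x \<le> Nplus N v" and ny: "\<bar>y\<bar> \<le> Nplus N v" by (auto simp: v Nplus_def)
      have "N (Amap F' G' p x + y *\<^sub>R Bvec F' G' p) \<le> N (Amap F' G' p x) + \<bar>y\<bar> * N (Bvec F' G' p)"
        using Ntri[OF normN] Nscale[OF normN] by metis
      also have "\<dots> \<le> ?a * N x + \<bar>y\<bar> * ?bb"
        using opnn_bound(1)[OF normN lA, of x] Aa Bb Nge0[OF normN, of x]
        by (intro add_mono) (auto intro: order_trans mult_right_mono mult_left_mono)
      also have "\<dots> \<le> ?a * Nplus N v + ?bb * Nplus N v"
        using mult_left_mono[OF nx a0] mult_right_mono[OF ny b0] by (simp add: algebra_simps)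
      also have "\<dots> = (?a + ?bb) * Nplus N v" by (simp add: algebra_simps)
      also have "\<dots> \<le> K * Nplus N v" using Nplus_ge0[OF normN, of v]
        by (intro mult_right_mono) (auto simp: K_def)
      finally have 1: "N (Amap F' G' p x + y *\<^sub>R Bvec F' G' p) \<le> K * Nplus N v" .
      have "\<bar>Cmap G' p x + y\<bar> \<le> \<bar>Cmap G' p x\<bar> + \<bar>y\<bar>" by (rule abs_triangle_ineq)
      also have "\<dots> \<le> ?c * N x + \<bar>y\<bar>"
        using opn1_bound(1)[OF normN lC, of x] Cc Nge0[OF normN, of x]
        by (auto intro: order_trans mult_right_mono)
      also have "\<dots> \<le> ?c * Nplus N v + Nplus N v" using c0 nx ny by (auto intro: add_mono mult_left_mono)
      also have "\<dots> = (?c + 1) * Nplus N v" by (simp add: algebra_simps)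
      also have "\<dots> \<le> K * Nplus N v" using Nplus_ge0[OF normN, of v]
        by (intro mult_right_mono) (auto simp: K_def)
      finally have 2: "\<bar>Cmap G' p x + y\<bar> \<le> K * Nplus N v" .
      show ?thesis using 1 2 by (simp add: v DThat_def Nplus_def)
    qed
    have Mb: "opnormL N i (Mop F' G' p b) \<le> K ^ i * opnormL N i b"
    proof (rule opL_least[OF normN])
      fix xs assume h: "\<forall>k<i. Nplus N (xs k) \<le> 1"
      define ys where "ys = (\<lambda>k. inverse K *\<^sub>R DThat F' G' p (xs k))"
      have "Mop F' G' p b xs = b (\<lambda>k. K *\<^sub>R ys k)" using Kp by (simp add: Mop_def ys_def)
      also have "\<dots> = K ^ i *\<^sub>R b ys" using ml_scale_all[OF ml, of "\<lambda>_. K" ys] by simp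
      finally have e: "Mop F' G' p b xs = K ^ i *\<^sub>R b ys" .
      have "\<forall>k<i. Nplus N (ys k) \<le> 1"
      proof (intro allI impI)
        fix k assume k: "k < i"
        have "Nplus N (ys k) = inverse K * Nplus N (DThat F' G' p (xs k))"
          using Kp by (simp add: ys_def Nplus_scale[OF normN])
        also have "\<dots> \<le> inverse K * (K * Nplus N (xs k))" using DT Kp by (simp add: mult_left_mono)
        also have "\<dots> \<le> 1" using Kp h k by (auto simp: mult.assoc[symmetric])
        finally show "Nplus N (ys k) \<le> 1" .
      qed
      hence "N (b ys) \<le> opnormL N i b" by (rule opL_upper[OF normN ml])
      thus "N (Mop F' G' p b xs) \<le> K ^ i * opnormL N i b"
        using e Kp by (simp add: Nscale[OF normN] mult_left_mono)
    qed
    obtain xs where "b xs \<noteq> 0" using bnz by blast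
    hence pos: "opnormL N i b > 0" by (rule opL_pos[OF normN ml])
    have r: "opnormL N i (Mop F' G' p b) / opnormL N i b \<le> K ^ i"
      using Mb pos by (simp add: divide_le_eq)
    let ?S = "{(?a + ?bb) ^ m * (?c + 1) ^ m' | m m'. m + m' = i}"
    have fin: "finite ?S"
    proof (rule finite_subset[of _ "(\<lambda>m. (?a + ?bb) ^ m * (?c + 1) ^ (i - m)) ` {..i}"])
      show "?S \<subseteq> (\<lambda>m. (?a + ?bb) ^ m * (?c + 1) ^ (i - m)) ` {..i}"
      proof
        fix z assume "z \<in> ?S"
        then obtain m m' where "z = (?a + ?bb) ^ m * (?c + 1) ^ m'" "m + m' = i" by blast
        thus "z \<in> (\<lambda>m. (?a + ?bb) ^ m * (?c + 1) ^ (i - m)) ` {..i}"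
          by (intro image_eqI[of _ _ m]) auto
      qed
    qed simp
    have "K ^ i \<in> ?S"
    proof (cases "?a + ?bb \<ge> ?c + 1")
      case True
      hence "K ^ i = (?a + ?bb) ^ i * (?c + 1) ^ 0" by (simp add: K_def)
      thus ?thesis by (intro CollectI exI[of _ i] exI[of _ 0]) simp
    next
      case False
      hence "K ^ i = (?a + ?bb) ^ 0 * (?c + 1) ^ i" by (simp add: K_def)
      thus ?thesis by (intro CollectI exI[of _ 0] exI[of _ i]) simp
    qed
    hence "K ^ i \<le> Max ?S" using fin by (rule Max_ge[rotated])
    thus ?thesis using r by linarith
  qed
  show ?thesis
    apply (rule exI[of _ "opnormL N i"])
    apply (intro conjI)
      apply (rule opL_norm[OF normN])
     apply (rule exI[of _ 1], rule exI[of _ 1], simp)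
    using ratio by blast
qed

end
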